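(* Let $X$ be a real-valued heavy-tailed random variable with $0<E(X)<\infty$ and $E((X^+)^{1+\delta})<\infty$ for some $\delta>0$, let $(X_i)_{i\ge1}$ be IID with the law of $X$, let $N$ be a light-tailed random variable with values in $\{1,2,3,\dots\}$ independent of $(X_i)$, and put $S_N=\sum_{k=1}^N X_k$. If $h_X$ is a natural scale of $X$ with $h_X(x)\ge(1+\delta)\log x$ for all large $x$, then $h_X$ is a natural scale of $S_N$.
   Context: $R_Y(x):=-\log P(Y>x)$. $Y$ is heavy-tailed if $E(e^{sY})=\infty$ for all $s>0$, light-tailed otherwise. A natural scale of a heavy-tailed $Y$ is a concave $h:[0,\infty)\to[0,\infty)$ with $h(0)=0$, $h(x)\to\infty$, and $\liminf_{x\to\infty}R_Y(x)/h(x)=1$. $y^+=\max(0,y)$. *)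

theory Defs
  imports "HOL-Probability.Probability"
begin

definition tail_rate :: "'a measure \<Rightarrow> ('a \<Rightarrow> real) \<Rightarrow> real \<Rightarrow> ereal" where
  "tail_rate M Y x =
     (let p = measure M {\<omega> \<in> space M. Y \<omega> > x} in
      if p = 0 then \<infinity> else ereal (- ln p))"

definition heavy_tailed :: "'a measure \<Rightarrow> ('a \<Rightarrow> real) \<Rightarrow> bool" where
  "heavy_tailed M Y \<longleftrightarrow>
     (\<forall>s>0. (\<integral>\<^sup>+ \<omega>. ennreal (exp (s * Y \<omega>)) \<partial>M) = \<infinity>)"

definition light_tailed :: "'a measure \<Rightarrow> ('a \<Rightarrow> real) \<Rightarrow> bool" where
  "light_tailed M Y \<longleftrightarrow> \<not> heavy_tailed M Y"

definition natural_scale :: "'a measure \<Rightarrow> ('a \<Rightarrow> real) \<Rightarrow> (real \<Rightarrow> real) \<Rightarrow> bool" where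
  "natural_scale M Y h \<longleftrightarrow>
     heavy_tailed M Y \<and>
     concave_on {0..} h \<and> (\<forall>x\<ge>0. h x \<ge> 0) \<and> h 0 = 0 \<and>
     filterlim h at_top at_top \<and>
     Liminf at_top (\<lambda>x. tail_rate M Y x / ereal (h x)) = 1"

end

theory Submission
  imports Defs
begin


lemma h_ratio:
  fixes h :: "real \<Rightarrow> real"
  assumes cc: "concave_on {0..} h" and h0: "h 0 = 0"
    and t: "0 \<le> t" "t \<le> x" and x: "0 < x"
  shows "t / x * h x \<le> h t"
proof -
  have "h ((1 - t/x) *\<^sub>R 0 + (t/x) *\<^sub>R x) \<ge> (1 - t/x) * h 0 + (t/x) * h x"
    using concave_onD[OF cc, of "t/x" 0 x] t x by auto
  then show ?thesis using h0 x by simp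
qed

lemma h_subadd:
  fixes h :: "real \<Rightarrow> real"
  assumes cc: "concave_on {0..} h" and h0: "h 0 = 0"
    and a: "0 \<le> a" and b: "0 \<le> b"
  shows "h (a + b) \<le> h a + h b"
proof (cases "a + b = 0")
  case True then have "a = 0" "b = 0" using a b by auto
  then show ?thesis using h0 by simp
next
  case False
  then have s: "0 < a + b" using a b by auto
  have 1: "a / (a+b) * h (a+b) \<le> h a" using h_ratio[OF cc h0 a _ s] b by auto
  have 2: "b / (a+b) * h (a+b) \<le> h b" using h_ratio[OF cc h0 b _ s] a by auto
  have "a / (a+b) * h (a+b) + b / (a+b) * h (a+b) = (a + b) / (a+b) * h (a+b)"
    by (metis add_divide_distrib distrib_right)
  also have "\<dots> = h (a+b)" using s by simp
  finally have "a / (a+b) * h (a+b) + b / (a+b) * h (a+b) = h (a+b)" .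
  then show ?thesis using 1 2 by linarith
qed

lemma h_mono:
  fixes h :: "real \<Rightarrow> real"
  assumes cc: "concave_on {0..} h" and nn: "\<And>x. x \<ge> 0 \<Longrightarrow> h x \<ge> 0"
    and a: "0 \<le> a" and ab: "a \<le> b"
  shows "h a \<le> h b"
proof (rule ccontr)
  assume "\<not> h a \<le> h b"
  then have lt: "h b < h a" by simp
  define d where "d = h a - h b"
  have d: "d > 0" using lt d_def by simp
  have ha: "h a > 0" using lt nn[of b] a ab by linarith
  have ab': "a < b" using ab lt by (cases "a = b") auto
  define z where "z = a + (b - a) * (h a / d + 1)"
  define t where "t = d / (h a + d)"
  have t01: "0 \<le> t" "t \<le> 1" using d ha t_def by auto
  have zb: "z \<ge> b" using z_def ab' ha d by (simp add: algebra_simps)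
  have "h a + d > 0" using d ha by simp
  moreover have "h a / d + 1 = (h a + d) / d" using d by (simp add: field_simps)
  ultimately have tt: "t * (h a / d + 1) = 1" unfolding t_def using d by simp
  have "(1 - t) *\<^sub>R a + t *\<^sub>R z = a + (b - a) * (t * (h a / d + 1))"
    unfolding z_def by (simp add: algebra_simps)
  then have beq: "(1 - t) *\<^sub>R a + t *\<^sub>R z = b" using tt by simp
  have "h ((1 - t) *\<^sub>R a + t *\<^sub>R z) \<ge> (1 - t) * h a + t * h z"
    using concave_onD[OF cc t01, of a z] a zb ab by auto
  moreover have "t * h z \<ge> 0" using t01 nn[of z] zb a ab by auto
  ultimately have "h b \<ge> (1 - t) * h a" using beq by simp
  moreover have "(1 - t) * h a = h a - d * h a / (h a + d)" unfolding t_def by (simp add: algebra_simps)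
  moreover have "d * h a / (h a + d) < d" using d ha by (simp add: divide_less_eq)
  ultimately show False using d_def by linarith
qed



lemma telescope_g:
  fixes g :: "real \<Rightarrow> real"
  shows "g (real K + 1) = g 1 + (\<Sum>k<K. g (real k + 2) - g (real k + 1))"
  by (induction K) (auto simp: algebra_simps)

lemma layer_pw:
  fixes g :: "real \<Rightarrow> real"
  assumes mono: "mono g" and g1: "0 \<le> g 1"
  shows "ennreal (g y) \<le> ennreal (g 1) +
     (\<Sum>k. ennreal (g (real k + 2) - g (real k + 1)) * indicator {r. r > real k + 1} y)"
proof (cases "y \<le> 1")
  case True
  then have "ennreal (g y) \<le> ennreal (g 1)" using monoD[OF mono True] by (simp add: ennreal_leI)
  then show ?thesis by (rule add_increasing2[rotated]) simp
next
  case False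
  define K where "K = nat (ceiling y) - 1"
  have "real_of_int (ceiling y) \<ge> y" by (rule le_of_int_ceiling)
  then have "real_of_int (ceiling y) > 1" using False by simp
  then have c2: "ceiling y \<ge> 2" by simp
  have "K + 1 = nat (ceiling y)" using c2 unfolding K_def by linarith
  then have "real K + 1 = real (nat (ceiling y))" by (metis of_nat_1 of_nat_add)
  also have "\<dots> = real_of_int (ceiling y)" using c2 by simp
  finally have eK: "real K + 1 = real_of_int (ceiling y)" .
  have K1: "real K + 1 \<ge> y" using eK le_of_int_ceiling by simp
  have K2: "real K < y" using eK ceiling_correct[of y] by linarith
  have dn: "\<And>k. 0 \<le> g (real k + 2) - g (real k + 1)" using monoD[OF mono, of "real k + 1" "real k + 2" for k] by simp
  have "g y \<le> g (real K + 1)" using K1 monoD[OF mono] by simp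
  also have "\<dots> = g 1 + (\<Sum>k<K. g (real k + 2) - g (real k + 1))" by (rule telescope_g)
  finally have "ennreal (g y) \<le> ennreal (g 1 + (\<Sum>k<K. g (real k + 2) - g (real k + 1)))"
    by (rule ennreal_leI)
  also have "\<dots> = ennreal (g 1) + (\<Sum>k<K. ennreal (g (real k + 2) - g (real k + 1)))"
    using g1 dn by (simp add: ennreal_plus sum_nonneg sum_ennreal)
  also have "(\<Sum>k<K. ennreal (g (real k + 2) - g (real k + 1))) =
      (\<Sum>k<K. ennreal (g (real k + 2) - g (real k + 1)) * indicator {r. r > real k + 1} y)"
  proof (rule sum.cong)
    fix k assume "k \<in> {..<K}"
    then have "real k + 1 \<le> real K" by simp
    then have "y \<in> {r. r > real k + 1}" using K2 by simp
    then show "ennreal (g (real k + 2) - g (real k + 1)) =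
      ennreal (g (real k + 2) - g (real k + 1)) * indicator {r. r > real k + 1} y" by simp
  qed simp
  also have "\<dots> \<le> (\<Sum>k. ennreal (g (real k + 2) - g (real k + 1)) * indicator {r. r > real k + 1} y)"
    by (rule sum_le_suminf) auto
  finally show ?thesis by (simp add: add_left_mono)
qed

lemma (in prob_space) layer:
  fixes g :: "real \<Rightarrow> real" and Y :: "'a \<Rightarrow> real"
  assumes Y: "Y \<in> borel_measurable M" and mono: "mono g" and g1: "0 \<le> g 1"
  shows "(\<integral>\<^sup>+\<omega>. ennreal (g (Y \<omega>)) \<partial>M) \<le> ennreal (g 1) +
     (\<Sum>k. ennreal (g (real k + 2) - g (real k + 1)) * ennreal (prob {\<omega>\<in>space M. Y \<omega> > real k + 1}))"
proof -
  have meas: "\<And>k. {\<omega>\<in>space M. Y \<omega> > real k + 1} \<in> sets M" using Y by measurable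
  have "(\<integral>\<^sup>+\<omega>. ennreal (g (Y \<omega>)) \<partial>M) \<le> (\<integral>\<^sup>+\<omega>. ennreal (g 1) +
     (\<Sum>k. ennreal (g (real k + 2) - g (real k + 1)) * indicator {\<omega>\<in>space M. Y \<omega> > real k + 1} \<omega>) \<partial>M)"
  proof (rule nn_integral_mono)
    fix \<omega> assume "\<omega> \<in> space M"
    then have "\<And>k. indicator {\<omega>\<in>space M. Y \<omega> > real k + 1} \<omega> = (indicator {r. r > real k + 1} (Y \<omega>) :: ennreal)"
      by (simp add: indicator_def)
    then show "ennreal (g (Y \<omega>)) \<le> ennreal (g 1) +
     (\<Sum>k. ennreal (g (real k + 2) - g (real k + 1)) * indicator {\<omega>\<in>space M. Y \<omega> > real k + 1} \<omega>)"
      using layer_pw[OF mono g1, of "Y \<omega>"] by simp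
  qed
  also have "\<dots> = ennreal (g 1) + (\<Sum>k. ennreal (g (real k + 2) - g (real k + 1)) * emeasure M {\<omega>\<in>space M. Y \<omega> > real k + 1})"
    using meas
    by (subst nn_integral_add) (auto simp: nn_integral_suminf nn_integral_cmult_indicator emeasure_space_1)
  also have "\<dots> = ennreal (g 1) + (\<Sum>k. ennreal (g (real k + 2) - g (real k + 1)) * ennreal (prob {\<omega>\<in>space M. Y \<omega> > real k + 1}))"
    by (simp add: emeasure_eq_measure)
  finally show ?thesis .
qed



lemma neg_div_lt: "0 < b \<Longrightarrow> - a < c * b \<Longrightarrow> - (a / b) < (c::real)"
  by (metis minus_divide_left pos_divide_less_eq)

lemma lt_neg_div: "0 < b \<Longrightarrow> c * b < - a \<Longrightarrow> c < - (a / (b::real))"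
  by (metis minus_divide_left pos_less_divide_eq)

locale ctx = prob_space M for M :: "'a measure" +
  fixes X :: "nat \<Rightarrow> 'a \<Rightarrow> real" and N :: "'a \<Rightarrow> nat" and h :: "real \<Rightarrow> real"
  assumes indep: "indep_vars (\<lambda>_. borel) (\<lambda>i \<omega>. if i = 0 then real (N \<omega>) else X i \<omega>) UNIV"
    and ident: "\<And>i. i \<ge> 1 \<Longrightarrow> distr M borel (X i) = distr M borel (X 1)"
    and heavy: "heavy_tailed M (X 1)"
    and N_pos: "\<And>\<omega>. \<omega> \<in> space M \<Longrightarrow> N \<omega> \<ge> 1"
    and N_light: "light_tailed M (\<lambda>\<omega>. real (N \<omega>))"
    and scale: "natural_scale M (X 1) h"
begin

definition Z where "Z i \<omega> = (if i = 0 then real (N \<omega>) else X i \<omega>)"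

lemma Zm: "Z i \<in> borel_measurable M"
  using indep unfolding indep_vars_def Z_def by auto

lemma Xm[measurable]: "i \<ge> 1 \<Longrightarrow> X i \<in> borel_measurable M"
  using Zm[of i] unfolding Z_def by (simp cong: measurable_cong)

lemma X1m[measurable]: "X 1 \<in> borel_measurable M"
  using Xm by simp

lemma Nrm[measurable]: "(\<lambda>\<omega>. real (N \<omega>)) \<in> borel_measurable M"
  using Zm[of 0] unfolding Z_def by simp

lemma Nm[measurable]: "N \<in> measurable M (count_space UNIV)"
proof (subst measurable_count_space_eq2_countable, intro conjI ballI)
  fix n :: nat
  have "N -` {n} \<inter> space M = {\<omega>\<in>space M. real (N \<omega>) = real n}" by auto
  also have "\<dots> \<in> sets M" by measurable
  finally show "N -` {n} \<inter> space M \<in> sets M" .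
qed auto

definition S where "S \<omega> = (\<Sum>k=1..N \<omega>. X k \<omega>)"

lemma Sm[measurable]: "S \<in> borel_measurable M"
proof -
  have "(\<lambda>\<omega>. (\<lambda>n \<omega>. \<Sum>k=1..n. X k \<omega>) (N \<omega>) \<omega>) \<in> borel_measurable M"
    by (rule measurable_compose_countable[OF _ Nm]) auto
  then show ?thesis unfolding S_def by simp
qed

lemma dist_prob:
  assumes i: "i \<ge> 1" and A: "A \<in> sets borel"
  shows "prob {\<omega>\<in>space M. X i \<omega> \<in> A} = prob {\<omega>\<in>space M. X 1 \<omega> \<in> A}"
proof -
  have "prob {\<omega>\<in>space M. X i \<omega> \<in> A} = measure (distr M borel (X i)) A"
    using A i by (subst measure_distr) (auto simp: vimage_def Int_def conj_commute)
  also have "\<dots> = measure (distr M borel (X 1)) A" using ident[OF i] by simp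
  also have "\<dots> = prob {\<omega>\<in>space M. X 1 \<omega> \<in> A}"
    using A by (subst measure_distr) (auto simp: vimage_def Int_def conj_commute)
  finally show ?thesis .
qed

lemma dist_int:
  assumes i: "i \<ge> 1" and f: "f \<in> borel_measurable borel"
  shows "(\<integral>\<^sup>+\<omega>. f (X i \<omega>) \<partial>M) = (\<integral>\<^sup>+\<omega>. f (X 1 \<omega>) \<partial>M)"
proof -
  have "(\<integral>\<^sup>+\<omega>. f (X i \<omega>) \<partial>M) = (\<integral>\<^sup>+x. f x \<partial>distr M borel (X i))"
    using i f by (subst nn_integral_distr) auto
  also have "\<dots> = (\<integral>\<^sup>+x. f x \<partial>distr M borel (X 1))" using ident[OF i] by simp
  also have "\<dots> = (\<integral>\<^sup>+\<omega>. f (X 1 \<omega>) \<partial>M)"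
    using f by (subst nn_integral_distr) auto
  finally show ?thesis .
qed

lemma prod_int:
  fixes f0 f :: "real \<Rightarrow> ennreal"
  assumes J: "finite J" "0 \<notin> J"
    and f0: "f0 \<in> borel_measurable borel" and f: "f \<in> borel_measurable borel"
  shows "(\<integral>\<^sup>+\<omega>. f0 (real (N \<omega>)) * (\<Prod>i\<in>J. f (X i \<omega>)) \<partial>M) =
     (\<integral>\<^sup>+\<omega>. f0 (real (N \<omega>)) \<partial>M) * (\<integral>\<^sup>+\<omega>. f (X 1 \<omega>) \<partial>M) ^ card J"
proof -
  define Y where "Y i = (if i = (0::nat) then f0 else f)" for i
  have ind: "indep_vars (\<lambda>_. borel) (\<lambda>i \<omega>. Y i (Z i \<omega>)) (insert 0 J)"
    by (rule indep_vars_compose2[OF indep_vars_subset[OF indep[folded Z_def]]])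
       (auto simp: Y_def f0 f)
  have "(\<integral>\<^sup>+\<omega>. f0 (real (N \<omega>)) * (\<Prod>i\<in>J. f (X i \<omega>)) \<partial>M) =
        (\<integral>\<^sup>+\<omega>. (\<Prod>i\<in>insert 0 J. Y i (Z i \<omega>)) \<partial>M)"
    using J by (intro nn_integral_cong) (auto simp: Y_def Z_def intro!: arg_cong2[where f="(*)"] prod.cong)
  also have "\<dots> = (\<Prod>i\<in>insert 0 J. \<integral>\<^sup>+\<omega>. Y i (Z i \<omega>) \<partial>M)"
    by (rule indep_vars_nn_integral) (use J ind in auto)
  also have "\<dots> = (\<integral>\<^sup>+\<omega>. f0 (real (N \<omega>)) \<partial>M) * (\<Prod>i\<in>J. \<integral>\<^sup>+\<omega>. f (X i \<omega>) \<partial>M)"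
    using J by (auto simp: Y_def Z_def intro!: arg_cong2[where f="(*)"] prod.cong)
  also have "(\<Prod>i\<in>J. \<integral>\<^sup>+\<omega>. f (X i \<omega>) \<partial>M) = (\<Prod>i\<in>J. \<integral>\<^sup>+\<omega>. f (X 1 \<omega>) \<partial>M)"
  proof (rule prod.cong)
    fix i assume "i \<in> J" then have "i \<ge> 1" using J by (cases i) auto
    then show "(\<integral>\<^sup>+\<omega>. f (X i \<omega>) \<partial>M) = (\<integral>\<^sup>+\<omega>. f (X 1 \<omega>) \<partial>M)" by (rule dist_int[OF _ f])
  qed simp
  finally show ?thesis by simp
qed


lemma exists_n0: "\<exists>n0. n0 \<ge> 1 \<and> prob {\<omega>\<in>space M. N \<omega> = n0} > 0"
proof (rule ccontr)
  assume "\<not> ?thesis"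
  then have z: "\<And>n. n \<ge> 1 \<Longrightarrow> prob {\<omega>\<in>space M. N \<omega> = n} = 0"
    using measure_nonneg by (metis less_eq_real_def)
  have "\<And>n. emeasure M {\<omega>\<in>space M. N \<omega> = n} = 0"
  proof -
    fix n show "emeasure M {\<omega>\<in>space M. N \<omega> = n} = 0"
    proof (cases "n \<ge> 1")
      case True then show ?thesis using z[OF True] by (simp add: emeasure_eq_measure)
    next
      case False
      then have "{\<omega>\<in>space M. N \<omega> = n} = {}" using N_pos by fastforce
      then show ?thesis by (metis emeasure_empty)
    qed
  qed
  then have "emeasure M (\<Union>n. {\<omega>\<in>space M. N \<omega> = n}) = 0"
    by (intro emeasure_UN_eq_0) auto
  moreover have "(\<Union>n. {\<omega>\<in>space M. N \<omega> = n}) = space M" by auto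
  ultimately show False using emeasure_space_1 by simp
qed

lemma exists_c: "\<exists>c\<ge>0. prob {\<omega>\<in>space M. X 1 \<omega> > - c} > 0"
proof (rule ccontr)
  assume "\<not> ?thesis"
  then have z: "\<And>m::nat. prob {\<omega>\<in>space M. X 1 \<omega> > - real m} = 0"
    using measure_nonneg by (metis less_eq_real_def of_nat_0_le_iff)
  have "\<And>m::nat. emeasure M {\<omega>\<in>space M. X 1 \<omega> > - real m} = 0"
    using z by (simp add: emeasure_eq_measure)
  then have "emeasure M (\<Union>m. {\<omega>\<in>space M. X 1 \<omega> > - real m}) = 0"
    by (intro emeasure_UN_eq_0) auto
  moreover have "(\<Union>m. {\<omega>\<in>space M. X 1 \<omega> > - real m}) = space M"
  proof safe
    fix \<omega> assume "\<omega> \<in> space M"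
    obtain m :: nat where "real m > - X 1 \<omega>" using reals_Archimedean2 by blast
    then have "- real m < X 1 \<omega>" by linarith
    then show "\<omega> \<in> (\<Union>m. {\<omega>\<in>space M. X 1 \<omega> > - real m})" using \<open>\<omega> \<in> space M\<close> by blast
  qed
  ultimately show False using emeasure_space_1 by simp
qed

definition F where "F t = prob {\<omega>\<in>space M. X 1 \<omega> > t}"

lemma lowerB: "\<exists>c K. c \<ge> 0 \<and> K > 0 \<and> (\<forall>y. prob {\<omega>\<in>space M. S \<omega> > y - c} \<ge> K * F y)"
proof -
  obtain n0 where n0: "n0 \<ge> 1" "prob {\<omega>\<in>space M. N \<omega> = n0} > 0" using exists_n0 by blast
  obtain c1 where c1: "c1 \<ge> 0" "prob {\<omega>\<in>space M. X 1 \<omega> > - c1} > 0" using exists_c by blast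
  define p0 where "p0 = prob {\<omega>\<in>space M. N \<omega> = n0}"
  define q where "q = prob {\<omega>\<in>space M. X 1 \<omega> > - c1}"
  define c where "c = real (n0 - 1) * c1"
  define K where "K = p0 * q ^ (n0 - 1)"
  have "\<forall>y. prob {\<omega>\<in>space M. S \<omega> > y - c} \<ge> K * F y"
  proof
    fix y
    define A where "A i = (if i = 0 then {real n0} else if i = 1 then {y<..} else {-c1<..})" for i :: nat
    define E where "E = (\<Inter>i\<in>{0..n0}. Z i -` A i \<inter> space M)"
    have "prob E = (\<Prod>i\<in>{0..n0}. prob (Z i -` A i \<inter> space M))"
      unfolding E_def Z_def by (rule indep_varsD[OF indep]) (auto simp: A_def)
    also have "{0..n0} = insert 0 (insert 1 {2..n0})" using n0 by auto
    also have "(\<Prod>i\<in>insert 0 (insert 1 {2..n0}). prob (Z i -` A i \<inter> space M)) =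
        prob (Z 0 -` A 0 \<inter> space M) * (prob (Z 1 -` A 1 \<inter> space M) * (\<Prod>i\<in>{2..n0}. prob (Z i -` A i \<inter> space M)))"
      by simp
    also have "prob (Z 0 -` A 0 \<inter> space M) = p0"
      unfolding p0_def A_def Z_def by (auto intro!: arg_cong[where f=prob])
    also have "prob (Z 1 -` A 1 \<inter> space M) = F y"
      unfolding F_def A_def Z_def by (auto intro!: arg_cong[where f=prob])
    also have "(\<Prod>i\<in>{2..n0}. prob (Z i -` A i \<inter> space M)) = (\<Prod>i\<in>{2..n0}. q)"
    proof (rule prod.cong)
      fix i assume i: "i \<in> {2..n0}"
      have "prob (Z i -` A i \<inter> space M) = prob {\<omega>\<in>space M. X i \<omega> \<in> {-c1<..}}"
        using i unfolding A_def Z_def by (auto intro!: arg_cong[where f=prob])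
      also have "\<dots> = prob {\<omega>\<in>space M. X 1 \<omega> \<in> {-c1<..}}" using i by (intro dist_prob) auto
      finally show "prob (Z i -` A i \<inter> space M) = q" unfolding q_def by simp
    qed simp
    finally have pE: "prob E = K * F y" unfolding K_def using n0 by (simp add: algebra_simps)
    have "E \<subseteq> {\<omega>\<in>space M. S \<omega> > y - c}"
    proof
      fix \<omega> assume "\<omega> \<in> E"
      then have mem: "\<And>i. i \<in> {0..n0} \<Longrightarrow> Z i \<omega> \<in> A i" and sp: "\<omega> \<in> space M"
        unfolding E_def by auto
      have "real (N \<omega>) = real n0" using mem[of 0] by (simp add: Z_def A_def)
      then have N0: "N \<omega> = n0" by simp
      have X1: "X 1 \<omega> > y" using mem[of 1] n0 by (simp add: Z_def A_def)
      have Xi: "\<And>i. i \<in> {2..n0} \<Longrightarrow> X i \<omega> > - c1"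
      proof -
        fix i assume i: "i \<in> {2..n0}"
        then show "X i \<omega> > - c1" using mem[of i] by (simp add: Z_def A_def)
      qed
      note w = sp N0 X1 Xi
      have "S \<omega> = X 1 \<omega> + (\<Sum>k=2..n0. X k \<omega>)"
        unfolding S_def w(2) using n0 by (simp add: sum.atLeast_Suc_atMost numeral_2_eq_2)
      moreover have "(\<Sum>k=2..n0. X k \<omega>) \<ge> (\<Sum>k=2..n0. - c1)"
        using w(4) by (intro sum_mono) (simp add: less_imp_le)
      moreover have "(\<Sum>k=2..n0. - c1) = - c" unfolding c_def using n0 by simp
      ultimately show "\<omega> \<in> {\<omega>\<in>space M. S \<omega> > y - c}" using w by auto
    qed
    moreover have "{\<omega>\<in>space M. S \<omega> > y - c} \<in> sets M" by measurable
    ultimately have "prob E \<le> prob {\<omega>\<in>space M. S \<omega> > y - c}"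
      by (intro finite_measure_mono) auto
    then show "prob {\<omega>\<in>space M. S \<omega> > y - c} \<ge> K * F y" using pE by simp
  qed
  moreover have "K > 0" unfolding K_def p0_def q_def using n0 c1 by simp
  moreover have "c \<ge> 0" unfolding c_def using c1 by simp
  ultimately show ?thesis by blast
qed


lemma heavyS: "heavy_tailed M S"
  unfolding heavy_tailed_def
proof (intro allI impI)
  fix s :: real assume s: "s > 0"
  obtain n0 where n0: "n0 \<ge> 1" "prob {\<omega>\<in>space M. N \<omega> = n0} > 0" using exists_n0 by blast
  have hX: "(\<integral>\<^sup>+\<omega>. ennreal (exp (s * X 1 \<omega>)) \<partial>M) = \<infinity>" using heavy s unfolding heavy_tailed_def by auto
  have "(\<integral>\<^sup>+\<omega>. indicator {real n0} (real (N \<omega>)) * (\<Prod>i\<in>{1..n0}. ennreal (exp (s * X i \<omega>))) \<partial>M) \<le>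
        (\<integral>\<^sup>+\<omega>. ennreal (exp (s * S \<omega>)) \<partial>M)"
  proof (rule nn_integral_mono)
    fix \<omega> assume "\<omega> \<in> space M"
    show "indicator {real n0} (real (N \<omega>)) * (\<Prod>i\<in>{1..n0}. ennreal (exp (s * X i \<omega>))) \<le> ennreal (exp (s * S \<omega>))"
    proof (cases "N \<omega> = n0")
      case True
      have "exp (s * S \<omega>) = (\<Prod>i\<in>{1..n0}. exp (s * X i \<omega>))"
        unfolding S_def True by (simp add: sum_distrib_left exp_sum)
      then show ?thesis using True by (simp add: prod_ennreal)
    next
      case False then show ?thesis by simp
    qed
  qed
  moreover have "(\<integral>\<^sup>+\<omega>. indicator {real n0} (real (N \<omega>)) * (\<Prod>i\<in>{1..n0}. ennreal (exp (s * X i \<omega>))) \<partial>M) =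
      (\<integral>\<^sup>+\<omega>. indicator {real n0} (real (N \<omega>)) \<partial>M) * (\<integral>\<^sup>+\<omega>. ennreal (exp (s * X 1 \<omega>)) \<partial>M) ^ card {1..n0}"
    using prod_int[of "{1..n0}" "indicator {real n0}" "\<lambda>x. ennreal (exp (s * x))"] by simp
  moreover have "(\<integral>\<^sup>+\<omega>. indicator {real n0} (real (N \<omega>)) \<partial>M) = emeasure M {\<omega>\<in>space M. N \<omega> = n0}"
  proof -
    have ms: "{\<omega>\<in>space M. N \<omega> = n0} \<in> sets M" by measurable
    have "(\<integral>\<^sup>+\<omega>. indicator {real n0} (real (N \<omega>)) \<partial>M) = (\<integral>\<^sup>+\<omega>. indicator {\<omega>\<in>space M. N \<omega> = n0} \<omega> \<partial>M)"
      by (rule nn_integral_cong) (simp add: indicator_def)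
    then show ?thesis using ms by simp
  qed
  moreover have "emeasure M {\<omega>\<in>space M. N \<omega> = n0} \<noteq> 0" using n0 by (simp add: emeasure_eq_measure)
  ultimately show "(\<integral>\<^sup>+\<omega>. ennreal (exp (s * S \<omega>)) \<partial>M) = \<infinity>"
    using hX n0 by (simp add: ennreal_mult_eq_top_iff top_unique)
qed


lemma ratio_eq:
  assumes "h t > 0"
  shows "tail_rate M Y t / ereal (h t) =
    (if measure M {\<omega>\<in>space M. Y \<omega> > t} = 0 then \<infinity> else ereal (- ln (measure M {\<omega>\<in>space M. Y \<omega> > t}) / h t))"
  using assms unfolding tail_rate_def Let_def by auto

lemma h_cc: "concave_on {0..} h" and h_nn: "\<And>x. x \<ge> 0 \<Longrightarrow> h x \<ge> 0" and h_0: "h 0 = 0"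
  and h_top: "filterlim h at_top at_top"
  and h_lim: "Liminf at_top (\<lambda>x. tail_rate M (X 1) x / ereal (h x)) = 1"
  using scale unfolding natural_scale_def by auto

lemma h_pos_ev: "eventually (\<lambda>t. h t > c) at_top"
  using h_top by (simp add: filterlim_at_top_dense)

lemma tailX_ev:
  assumes e: "0 < e" "e < 1"
  shows "eventually (\<lambda>t. F t \<le> exp (- (1 - e) * h t)) at_top"
proof -
  have "ereal (1 - e) < 1" using e by simp
  then have ev: "eventually (\<lambda>t. ereal (1 - e) < tail_rate M (X 1) t / ereal (h t)) at_top"
    using h_lim le_Liminf_iff[of 1 at_top "\<lambda>x. tail_rate M (X 1) x / ereal (h x)"] by auto
  show ?thesis using ev h_pos_ev[of 0]
  proof eventually_elim
    case (elim t)
    show ?case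
    proof (cases "F t = 0")
      case True then show ?thesis by simp
    next
      case False
      then have "ereal (1 - e) < ereal (- ln (F t) / h t)" using elim ratio_eq[of t "X 1"]
        unfolding F_def by simp
      then have "(1 - e) * h t < - ln (F t)" using elim by (simp add: field_simps)
      then have "ln (F t) < - (1 - e) * h t" by (simp add: algebra_simps)
      moreover have "F t > 0" using False unfolding F_def by (simp add: zero_less_measure_iff)
      ultimately show ?thesis by (metis exp_ln less_imp_le exp_less_cancel_iff less_le_trans order_refl)
    qed
  qed
qed

lemma tailX_glob:
  assumes e: "0 < e" "e < 1"
  shows "\<exists>C0\<ge>1. \<forall>t\<ge>0. F t \<le> C0 * exp (- (1 - e) * h t)"
proof -
  obtain t0 where t0: "\<And>t. t \<ge> t0 \<Longrightarrow> F t \<le> exp (- (1 - e) * h t)"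
    using tailX_ev[OF e] by (auto simp: eventually_at_top_linorder)
  define t1 where "t1 = max t0 0"
  define C0 where "C0 = exp (h t1)"
  have C0: "C0 \<ge> 1" unfolding C0_def using h_nn[of t1] t1_def by simp
  have "\<forall>t\<ge>0. F t \<le> C0 * exp (- (1 - e) * h t)"
  proof (intro allI impI)
    fix t :: real assume t: "t \<ge> 0"
    show "F t \<le> C0 * exp (- (1 - e) * h t)"
    proof (cases "t \<ge> t0")
      case True
      then have "F t \<le> exp (- (1 - e) * h t)" by (rule t0)
      also have "\<dots> \<le> C0 * exp (- (1 - e) * h t)" using C0 by simp
      finally show ?thesis .
    next
      case False
      then have "t \<le> t1" unfolding t1_def by simp
      then have ht: "h t \<le> h t1" using h_mono[OF h_cc h_nn t] by blast
      have "(1 - e) * h t \<le> h t" using e h_nn[OF t] by (simp add: algebra_simps)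
      then have "0 \<le> h t1 - (1 - e) * h t" using ht by simp
      then have "1 \<le> exp (h t1 - (1 - e) * h t)" by simp
      also have "\<dots> = C0 * exp (- (1 - e) * h t)" unfolding C0_def by (simp add: exp_add[symmetric] algebra_simps)
      finally show ?thesis unfolding F_def using prob_le_1 by (meson order_trans)
    qed
  qed
  then show ?thesis using C0 by blast
qed


lemma geo_ennreal:
  fixes a r :: real
  assumes "0 \<le> a" "0 \<le> r" "r < 1"
  shows "(\<Sum>k. ennreal (a * r ^ Suc k)) = ennreal (a * r / (1 - r))"
proof -
  have sr: "summable (\<lambda>k. r ^ k)" using assms by (intro summable_geometric) simp
  have "(\<lambda>k. a * r ^ Suc k) = (\<lambda>k. (a * r) * r ^ k)" by (simp add: algebra_simps)
  moreover have "(\<lambda>k. (a * r) * r ^ k) sums ((a * r) * (1 / (1 - r)))"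
    using assms by (intro sums_mult geometric_sums) simp
  ultimately have "(\<lambda>k. a * r ^ Suc k) sums (a * r / (1 - r))" by simp
  then show ?thesis using assms
    by (subst suminf_ennreal2) (auto simp: sums_iff)
qed

lemma mu_small:
  assumes al: "\<alpha> > 0"
  shows "\<exists>x1>0. h x1 / x1 < \<alpha>"
proof (rule ccontr)
  assume "\<not> ?thesis"
  then have hx0: "\<And>x. x > 0 \<Longrightarrow> \<alpha> \<le> h x / x" by (meson not_le not_less)
  have hx: "\<And>x. x > 0 \<Longrightarrow> h x \<ge> \<alpha> * x"
  proof -
    fix x :: real assume x: "x > 0"
    then have "\<alpha> \<le> h x / x" by (rule hx0)
    then show "h x \<ge> \<alpha> * x" using x by (simp add: pos_le_divide_eq)
  qed
  obtain C0 where C0: "C0 \<ge> 1" "\<And>t. t \<ge> 0 \<Longrightarrow> F t \<le> C0 * exp (- (1 - 1/2) * h t)"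
    using tailX_glob[of "1/2"] by auto
  define \<beta> where "\<beta> = \<alpha> / 4"
  have b: "\<beta> > 0" using al \<beta>_def by simp
  define g where "g y = exp (\<beta> * y)" for y
  have mg: "mono g" unfolding g_def mono_def using b by auto
  have lay: "(\<integral>\<^sup>+\<omega>. ennreal (g (X 1 \<omega>)) \<partial>M) \<le> ennreal (g 1) +
     (\<Sum>k. ennreal (g (real k + 2) - g (real k + 1)) * ennreal (prob {\<omega>\<in>space M. X 1 \<omega> > real k + 1}))"
    by (rule layer[OF X1m mg]) (simp add: g_def)
  have trm: "ennreal (g (real k + 2) - g (real k + 1)) * ennreal (prob {\<omega>\<in>space M. X 1 \<omega> > real k + 1})
      \<le> ennreal (C0 * (exp \<beta> - 1) * exp (- \<beta>) ^ Suc k)" for k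
  proof -
    define t where "t = real k + 1"
    have t: "t > 0" unfolding t_def by simp
    have d: "g (real k + 2) - g (real k + 1) = exp (\<beta> * t) * (exp \<beta> - 1)"
      unfolding g_def t_def by (simp add: algebra_simps exp_add[symmetric])
    have dn: "0 \<le> exp (\<beta> * t) * (exp \<beta> - 1)" using b by simp
    have "F t \<le> C0 * exp (- (1 - 1/2) * h t)" using C0 t by simp
    also have "\<dots> \<le> C0 * exp (- 2 * \<beta> * t)"
    proof -
      have "\<alpha> * t = 4 * (\<beta> * t)" using \<beta>_def by simp
      then have "4 * (\<beta> * t) \<le> h t" using hx[OF t] by linarith
      then show ?thesis using C0 by simp
    qed
    finally have Ft: "F t \<le> C0 * exp (- 2 * \<beta> * t)" .
    have "exp (\<beta> * t) * (exp \<beta> - 1) * F t \<le> exp (\<beta> * t) * (exp \<beta> - 1) * (C0 * exp (- 2 * \<beta> * t))"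
      using Ft dn by (rule mult_left_mono)
    also have "\<dots> = C0 * (exp \<beta> - 1) * exp (- \<beta> * t)"
      by (simp add: algebra_simps exp_add[symmetric])
    also have "exp (- \<beta> * t) = exp (- \<beta>) ^ Suc k"
    proof -
      have "- \<beta> * t = real (Suc k) * (- \<beta>)" unfolding t_def by (simp add: algebra_simps)
      then show ?thesis by (simp only: exp_of_nat_mult)
    qed
    finally have "exp (\<beta> * t) * (exp \<beta> - 1) * F t \<le> C0 * (exp \<beta> - 1) * exp (- \<beta>) ^ Suc k" .
    then show ?thesis using d dn unfolding F_def t_def
      by (simp add: ennreal_mult[symmetric] ennreal_leI)
  qed
  have "(\<Sum>k. ennreal (g (real k + 2) - g (real k + 1)) * ennreal (prob {\<omega>\<in>space M. X 1 \<omega> > real k + 1}))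
     \<le> (\<Sum>k. ennreal (C0 * (exp \<beta> - 1) * exp (- \<beta>) ^ Suc k))"
    by (intro suminf_le trm) auto
  also have "\<dots> = ennreal (C0 * (exp \<beta> - 1) * exp (- \<beta>) / (1 - exp (- \<beta>)))"
    using b C0 by (intro geo_ennreal) auto
  finally have "(\<integral>\<^sup>+\<omega>. ennreal (g (X 1 \<omega>)) \<partial>M) \<le> ennreal (g 1) + ennreal (C0 * (exp \<beta> - 1) * exp (- \<beta>) / (1 - exp (- \<beta>)))"
    using lay by (meson add_left_mono order_trans)
  then have "(\<integral>\<^sup>+\<omega>. ennreal (g (X 1 \<omega>)) \<partial>M) < \<infinity>"
    by (rule order.strict_trans1) simp
  moreover have "(\<integral>\<^sup>+\<omega>. ennreal (g (X 1 \<omega>)) \<partial>M) = \<infinity>" using heavy b unfolding heavy_tailed_def g_def by auto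
  ultimately show False by simp
qed


lemma mu_ev:
  assumes al: "\<alpha> > 0"
  shows "eventually (\<lambda>x. h x / x < \<alpha>) at_top"
proof -
  obtain x1 where x1: "x1 > 0" "h x1 / x1 < \<alpha>" using mu_small[OF al] by blast
  show ?thesis unfolding eventually_at_top_linorder
  proof (intro exI allI impI)
    fix x assume x: "x \<ge> x1"
    then have "x1 / x * h x \<le> h x1" using h_ratio[OF h_cc h_0, of x1 x] x1 by auto
    then have "h x / x \<le> h x1 / x1" using x x1 by (simp add: field_simps)
    then show "h x / x < \<alpha>" using x1 by simp
  qed
qed

lemma exp_minus_one_le: "exp (l::real) - 1 \<le> l * exp l"
proof -
  have "1 + (- l) \<le> exp (- l)" by (rule exp_ge_add_one_self)
  then have "(1 - l) * exp l \<le> exp (- l) * exp l" by (simp add: mult_right_mono)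
  then show ?thesis by (simp add: exp_minus field_simps)
qed

lemma geo_quot:
  fixes z :: real
  assumes z: "z > 0"
  shows "exp (- z) / (1 - exp (- z)) \<le> 1 / z"
proof -
  have "1 + z \<le> exp z" by (rule exp_ge_add_one_self)
  then have "z \<le> exp z - 1" by linarith
  then have "z * exp (- z) \<le> (exp z - 1) * exp (- z)" by (intro mult_right_mono) auto
  also have "\<dots> = 1 - exp (- z)" by (simp add: algebra_simps exp_minus)
  finally have a: "z * exp (- z) \<le> 1 - exp (- z)" .
  have "exp (- z) < 1" using z by simp
  then show ?thesis using a z by (simp add: divide_le_eq field_simps)
qed

lemma Mx_bound:
  fixes x e C0 :: real and L :: nat
  assumes e: "0 < e" "e < 1" and C0: "C0 \<ge> 1"
    and tail: "\<And>t. t \<ge> 0 \<Longrightarrow> F t \<le> C0 * exp (- (1 - e/4) * h t)"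
    and x: "x \<ge> 1" and hx: "h x > 0"
  defines "lm \<equiv> (1 - e) * (h x / x)"
  shows "(\<integral>\<^sup>+\<omega>. ennreal (exp (lm * min (X 1 \<omega>) x)) \<partial>M)
     \<le> ennreal (exp lm * (1 + C0 * lm * real L + C0 * exp (- (e/4) * h (real L)) * (2 / e)))"
proof -
  define \<mu> where "\<mu> = h x / x"
  have mu: "\<mu> > 0" unfolding \<mu>_def using hx x by simp
  have lam: "lm \<ge> 0" "lm = (1 - e) * \<mu>" unfolding lm_def \<mu>_def using e hx x by auto
  define g where "g y = exp (lm * min y x)" for y
  have mg: "mono g" unfolding g_def mono_def using lam by (auto intro!: mult_left_mono)
  have lay: "(\<integral>\<^sup>+\<omega>. ennreal (g (X 1 \<omega>)) \<partial>M) \<le> ennreal (g 1) +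
     (\<Sum>k. ennreal (g (real k + 2) - g (real k + 1)) * ennreal (prob {\<omega>\<in>space M. X 1 \<omega> > real k + 1}))"
    by (rule layer[OF X1m mg]) (simp add: g_def)
  define \<eta> where "\<eta> = exp (- (e/4) * h (real L))"
  define q where "q = exp (- (e/2) * \<mu>)"
  define D where "D = C0 * (exp lm - 1)"
  have D: "D \<ge> 0" unfolding D_def using C0 lam by simp
  have trm: "ennreal (g (real k + 2) - g (real k + 1)) * ennreal (prob {\<omega>\<in>space M. X 1 \<omega> > real k + 1})
      \<le> ennreal (D * (if k < L then 1 else 0)) + ennreal (D * \<eta> * q ^ Suc k)" for k
  proof -
    define t where "t = real k + 1"
    have t: "t \<ge> 1" unfolding t_def by simp
    have dn: "0 \<le> g (real k + 2) - g (real k + 1)" using mg by (simp add: monoD)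
    have Fn: "0 \<le> F t" unfolding F_def by simp
    have rhs: "0 \<le> D * (if k < L then 1 else 0)" "0 \<le> D * \<eta> * q ^ Suc k"
      using D unfolding \<eta>_def q_def by auto
    show ?thesis
    proof (cases "t < x")
      case False
      then have "g (real k + 2) - g (real k + 1) = 0" unfolding g_def t_def by (simp add: min_def)
      then show ?thesis by simp
    next
      case True
      have g1: "g (real k + 1) = exp (lm * t)" unfolding g_def t_def using True t_def by (simp add: min_def)
      have g2: "g (real k + 2) \<le> exp (lm * (t + 1))" unfolding g_def t_def using lam
        by (simp add: mult_left_mono)
      have "g (real k + 2) - g (real k + 1) \<le> exp (lm * t) * (exp lm - 1)"
        using g1 g2 by (simp add: algebra_simps exp_add[symmetric])
      then have "(g (real k + 2) - g (real k + 1)) * F t \<le> exp (lm * t) * (exp lm - 1) * F t"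
        using Fn by (rule mult_right_mono)
      also have "\<dots> \<le> exp (lm * t) * (exp lm - 1) * (C0 * exp (- (1 - e/4) * h t))"
        using tail[of t] t lam by (intro mult_left_mono) auto
      also have "\<dots> = D * (exp (lm * t) * exp (- (1 - e/4) * h t))"
        unfolding D_def by (simp add: algebra_simps)
      also have "exp (lm * t) * exp (- (1 - e/4) * h t) = exp (lm * t - (1 - e/4) * h t)"
        by (simp add: exp_add[symmetric] algebra_simps)
      also have "lm * t - (1 - e/4) * h t \<le> - (e/2) * \<mu> * t - (e/4) * h t"
      proof -
        have "t / x * h x \<le> h t" using h_ratio[OF h_cc h_0, of t x] True t by auto
        then have ht: "\<mu> * t \<le> h t" unfolding \<mu>_def by (simp add: field_simps)
        have "(1 - e/2) * (\<mu> * t) \<le> (1 - e/2) * h t" using ht e by (intro mult_left_mono) auto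
        moreover have "lm * t = \<mu> * t - e * (\<mu> * t)" unfolding lam(2) by (simp add: algebra_simps)
        ultimately show ?thesis by (simp add: algebra_simps)
      qed
      then have "D * exp (lm * t - (1 - e/4) * h t) \<le> D * exp (- (e/2) * \<mu> * t - (e/4) * h t)"
        using D by (intro mult_left_mono) auto
      also have "exp (- (e/2) * \<mu> * t - (e/4) * h t) = q ^ Suc k * exp (- (e/4) * h t)"
      proof -
        have "- (e/2) * \<mu> * t = real (Suc k) * (- (e/2) * \<mu>)" unfolding t_def by (simp add: algebra_simps)
        then have "exp (- (e/2) * \<mu> * t) = q ^ Suc k" unfolding q_def by (simp only: exp_of_nat_mult)
        then show ?thesis by (simp only: diff_conv_add_uminus exp_add mult_minus_left)
      qed
      also have "D * (q ^ Suc k * exp (- (e/4) * h t)) \<le> D * (if k < L then 1 else 0) + D * \<eta> * q ^ Suc k"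
      proof (cases "k < L")
        case True
        have "q ^ Suc k \<le> 1" unfolding q_def using e mu by (intro power_le_one) auto
        moreover have "exp (- (e/4) * h t) \<le> 1" using e h_nn[of t] t by auto
        ultimately have "q ^ Suc k * exp (- (e/4) * h t) \<le> 1"
          by (intro mult_le_one) auto
        then have "D * (q ^ Suc k * exp (- (e/4) * h t)) \<le> D" using D by (simp add: mult_left_le)
        then show ?thesis using True rhs by simp
      next
        case False
        then have "real L \<le> t" unfolding t_def by simp
        then have "h (real L) \<le> h t" using h_mono[OF h_cc h_nn, of "real L" t] by simp
        then have "exp (- (e/4) * h t) \<le> \<eta>" unfolding \<eta>_def using e by simp
        then have "D * (q ^ Suc k * exp (- (e/4) * h t)) \<le> D * (q ^ Suc k * \<eta>)"
          using D unfolding q_def by (intro mult_left_mono) auto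
        then show ?thesis using False by (simp add: algebra_simps)
      qed
      finally have "(g (real k + 2) - g (real k + 1)) * F t \<le> D * (if k < L then 1 else 0) + D * \<eta> * q ^ Suc k" .
      then have "ennreal ((g (real k + 2) - g (real k + 1)) * F t) \<le> ennreal (D * (if k < L then 1 else 0) + D * \<eta> * q ^ Suc k)"
        by (rule ennreal_leI)
      also have "\<dots> = ennreal (D * (if k < L then 1 else 0)) + ennreal (D * \<eta> * q ^ Suc k)"
        by (rule ennreal_plus[OF rhs])
      finally have "ennreal ((g (real k + 2) - g (real k + 1)) * F t) \<le> ennreal (D * (if k < L then 1 else 0)) + ennreal (D * \<eta> * q ^ Suc k)" .
      then show ?thesis using dn Fn unfolding F_def t_def by (simp add: ennreal_mult[symmetric])
    qed
  qed
  have q: "0 \<le> q" "q < 1" unfolding q_def using e mu by auto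
  have "(\<Sum>k. ennreal (g (real k + 2) - g (real k + 1)) * ennreal (prob {\<omega>\<in>space M. X 1 \<omega> > real k + 1}))
     \<le> (\<Sum>k. ennreal (D * (if k < L then 1 else 0)) + ennreal (D * \<eta> * q ^ Suc k))"
    by (intro suminf_le trm) auto
  also have "\<dots> = (\<Sum>k. ennreal (D * (if k < L then 1 else 0))) + (\<Sum>k. ennreal (D * \<eta> * q ^ Suc k))"
    by (rule suminf_add[symmetric]) auto
  also have "(\<Sum>k. ennreal (D * (if k < L then 1 else 0))) = ennreal (D * real L)"
  proof -
    have "(\<Sum>k. ennreal (D * (if k < L then 1 else 0))) = (\<Sum>k<L. ennreal (D * (if k < L then 1 else 0)))"
      by (rule suminf_finite) auto
    also have "\<dots> = (\<Sum>k<L. ennreal D)" by simp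
    also have "\<dots> = of_nat L * ennreal D" by simp
    also have "\<dots> = ennreal (real L) * ennreal D" by (simp only: ennreal_of_nat_eq_real_of_nat)
    also have "\<dots> = ennreal (D * real L)" using D by (simp only: ennreal_mult[symmetric] of_nat_0_le_iff mult.commute)
    finally show ?thesis .
  qed
  also have "(\<Sum>k. ennreal (D * \<eta> * q ^ Suc k)) = ennreal (D * \<eta> * q / (1 - q))"
    using D q unfolding \<eta>_def by (intro geo_ennreal) auto
  finally have sumb: "(\<Sum>k. ennreal (g (real k + 2) - g (real k + 1)) * ennreal (prob {\<omega>\<in>space M. X 1 \<omega> > real k + 1}))
     \<le> ennreal (D * real L) + ennreal (D * \<eta> * q / (1 - q))" .
  have real_ineq: "g 1 + D * real L + D * \<eta> * q / (1 - q) \<le> exp lm * (1 + C0 * lm * real L + C0 * \<eta> * (2 / e))"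
  proof -
    have g1: "g 1 = exp lm" unfolding g_def using x by (simp add: min_def)
    have el: "exp lm - 1 \<le> lm * exp lm" by (rule exp_minus_one_le)
    have D1: "D * real L \<le> exp lm * (C0 * lm * real L)"
    proof -
      have "D * real L = C0 * real L * (exp lm - 1)" unfolding D_def by simp
      also have "\<dots> \<le> C0 * real L * (lm * exp lm)" using el C0 by (intro mult_left_mono) auto
      finally show ?thesis by (simp add: algebra_simps)
    qed
    have D2: "D * \<eta> * q / (1 - q) \<le> exp lm * (C0 * \<eta> * (2 / e))"
    proof -
      have z: "(e/2) * \<mu> > 0" using e mu by simp
      have qq: "q / (1 - q) \<le> 1 / ((e/2) * \<mu>)" unfolding q_def using geo_quot[OF z] by simp
      have eta: "0 \<le> \<eta>" unfolding \<eta>_def by simp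
      have "D * \<eta> * q / (1 - q) = C0 * \<eta> * ((exp lm - 1) * (q / (1 - q)))" unfolding D_def by simp
      also have "\<dots> \<le> C0 * \<eta> * ((lm * exp lm) * (1 / ((e/2) * \<mu>)))"
      proof -
        have "(exp lm - 1) * (q / (1 - q)) \<le> (lm * exp lm) * (1 / ((e/2) * \<mu>))"
          by (rule mult_mono[OF el qq]) (use lam q in auto)
        then show ?thesis by (rule mult_left_mono) (use C0 eta in simp)
      qed
      also have "(lm * exp lm) * (1 / ((e/2) * \<mu>)) = exp lm * (2 * (1 - e) / e)"
        unfolding lam(2) using mu e by (simp add: field_simps)
      also have "C0 * \<eta> * (exp lm * (2 * (1 - e) / e)) \<le> C0 * \<eta> * (exp lm * (2 / e))"
        using C0 eta e by (intro mult_left_mono) (auto simp: divide_right_mono)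
      finally show ?thesis by (simp add: algebra_simps)
    qed
    show ?thesis using g1 D1 D2 by (simp add: algebra_simps)
  qed
  have "(\<integral>\<^sup>+\<omega>. ennreal (g (X 1 \<omega>)) \<partial>M) \<le> ennreal (g 1) + (ennreal (D * real L) + ennreal (D * \<eta> * q / (1 - q)))"
    using lay sumb by (meson add_left_mono order_trans)
  also have "\<dots> = ennreal (g 1 + D * real L + D * \<eta> * q / (1 - q))"
  proof -
    have n1: "0 \<le> g 1" "0 \<le> D * real L" "0 \<le> D * \<eta> * q / (1 - q)"
      using D q unfolding \<eta>_def g_def by auto
    have "ennreal (g 1 + D * real L + D * \<eta> * q / (1 - q)) = ennreal (g 1 + D * real L) + ennreal (D * \<eta> * q / (1 - q))"
      by (rule ennreal_plus) (use n1 in auto)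
    also have "ennreal (g 1 + D * real L) = ennreal (g 1) + ennreal (D * real L)"
      by (rule ennreal_plus) (use n1 in auto)
    finally show ?thesis by (simp add: add.assoc)
  qed
  also have "\<dots> \<le> ennreal (exp lm * (1 + C0 * lm * real L + C0 * \<eta> * (2 / e)))"
    by (rule ennreal_leI[OF real_ineq])
  finally show ?thesis unfolding g_def \<eta>_def .
qed


lemma decompN:
  fixes f :: "nat \<Rightarrow> 'a \<Rightarrow> ennreal"
  assumes fm: "\<And>n. f n \<in> borel_measurable M"
  shows "(\<integral>\<^sup>+\<omega>. f (N \<omega>) \<omega> \<partial>M) = (\<Sum>n. \<integral>\<^sup>+\<omega>. indicator {real n} (real (N \<omega>)) * f n \<omega> \<partial>M)"
proof -
  have pw: "f (N \<omega>) \<omega> = (\<Sum>n. indicator {real n} (real (N \<omega>)) * f n \<omega>)" for \<omega>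
  proof -
    have "(\<Sum>n. indicator {real n} (real (N \<omega>)) * f n \<omega>) = (\<Sum>n\<in>{N \<omega>}. indicator {real n} (real (N \<omega>)) * f n \<omega>)"
      by (rule suminf_finite) (auto simp: indicator_def)
    then show ?thesis by simp
  qed
  have "(\<integral>\<^sup>+\<omega>. f (N \<omega>) \<omega> \<partial>M) = (\<integral>\<^sup>+\<omega>. (\<Sum>n. indicator {real n} (real (N \<omega>)) * f n \<omega>) \<partial>M)"
    by (simp only: pw[symmetric])
  also have "\<dots> = (\<Sum>n. \<integral>\<^sup>+\<omega>. indicator {real n} (real (N \<omega>)) * f n \<omega> \<partial>M)"
    by (rule nn_integral_suminf) (use fm in measurable)
  finally show ?thesis .
qed

lemma pw_event:
  assumes lm: "lm \<ge> 0" and w: "\<omega> \<in> space M"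
  shows "indicator {\<omega>\<in>space M. S \<omega> > x} \<omega> \<le> (\<Sum>i\<in>{1..N \<omega>}. indicator {x<..} (X i \<omega>)) +
     ennreal (exp (- lm * x)) * (\<Prod>i\<in>{1..N \<omega>}. ennreal (exp (lm * min (X i \<omega>) x)))"
proof (cases "S \<omega> > x")
  case False then show ?thesis by simp
next
  case True
  show ?thesis
  proof (cases "\<exists>i\<in>{1..N \<omega>}. X i \<omega> > x")
    case True
    then obtain i where i: "i \<in> {1..N \<omega>}" "X i \<omega> > x" by blast
    have "(1::ennreal) = indicator {x<..} (X i \<omega>)" using i by simp
    also have "\<dots> \<le> (\<Sum>i\<in>{1..N \<omega>}. indicator {x<..} (X i \<omega>))"
      by (rule member_le_sum) (use i in auto)
    finally have "1 \<le> (\<Sum>i\<in>{1..N \<omega>}. indicator {x<..} (X i \<omega>) :: ennreal)" .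
    then show ?thesis by (simp add: add_increasing2 indicator_def)
  next
    case False
    then have mn: "\<And>i. i \<in> {1..N \<omega>} \<Longrightarrow> min (X i \<omega>) x = X i \<omega>" by force
    have "(\<Prod>i\<in>{1..N \<omega>}. ennreal (exp (lm * min (X i \<omega>) x))) = (\<Prod>i\<in>{1..N \<omega>}. ennreal (exp (lm * X i \<omega>)))"
      using mn by (intro prod.cong) auto
    also have "\<dots> = ennreal (\<Prod>i\<in>{1..N \<omega>}. exp (lm * X i \<omega>))" by (simp add: prod_ennreal)
    also have "(\<Prod>i\<in>{1..N \<omega>}. exp (lm * X i \<omega>)) = exp (lm * S \<omega>)"
      unfolding S_def by (simp add: sum_distrib_left exp_sum)
    finally have pe: "(\<Prod>i\<in>{1..N \<omega>}. ennreal (exp (lm * min (X i \<omega>) x))) = ennreal (exp (lm * S \<omega>))" .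
    have "exp (- lm * x) * exp (lm * S \<omega>) = exp (lm * (S \<omega> - x))" by (simp add: exp_add[symmetric] algebra_simps)
    also have "\<dots> \<ge> 1" using lm \<open>S \<omega> > x\<close> by simp
    finally have "1 \<le> ennreal (exp (- lm * x)) * ennreal (exp (lm * S \<omega>))"
      by (simp add: ennreal_mult[symmetric])
    then have "1 \<le> ennreal (exp (- lm * x)) * (\<Prod>i\<in>{1..N \<omega>}. ennreal (exp (lm * min (X i \<omega>) x)))"
      using pe by simp
    then show ?thesis by (simp add: add_increasing indicator_def)
  qed
qed


definition pn where "pn n = (\<integral>\<^sup>+\<omega>. indicator {real n} (real (N \<omega>)) \<partial>M)"

lemma int_ind_X: "(\<integral>\<^sup>+\<omega>. indicator {x<..} (X 1 \<omega>) \<partial>M) = ennreal (F x)"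
proof -
  have ms: "{\<omega>\<in>space M. X 1 \<omega> > x} \<in> sets M" by measurable
  have "(\<integral>\<^sup>+\<omega>. indicator {x<..} (X 1 \<omega>) \<partial>M) = (\<integral>\<^sup>+\<omega>. indicator {\<omega>\<in>space M. X 1 \<omega> > x} \<omega> \<partial>M)"
    by (rule nn_integral_cong) (simp add: indicator_def)
  then show ?thesis using ms by (simp add: emeasure_eq_measure F_def)
qed

lemma per_n:
  assumes s: "s > 0" and lm: "lm \<ge> 0"
    and Mx: "(\<integral>\<^sup>+\<omega>. ennreal (exp (lm * min (X 1 \<omega>) x)) \<partial>M) \<le> ennreal (exp s)"
  shows "(\<integral>\<^sup>+\<omega>. indicator {real n} (real (N \<omega>)) * ((\<Sum>i\<in>{1..n}. indicator {x<..} (X i \<omega>)) +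
     ennreal (exp (- lm * x)) * (\<Prod>i\<in>{1..n}. ennreal (exp (lm * min (X i \<omega>) x)))) \<partial>M)
     \<le> pn n * ennreal (exp (s * real n)) * ennreal (F x / s + exp (- lm * x))"
proof -
  define c where "c = exp (- lm * x)"
  define Mx' where "Mx' = (\<integral>\<^sup>+\<omega>. ennreal (exp (lm * min (X 1 \<omega>) x)) \<partial>M)"
  have "(\<integral>\<^sup>+\<omega>. indicator {real n} (real (N \<omega>)) * ((\<Sum>i\<in>{1..n}. indicator {x<..} (X i \<omega>)) +
     ennreal c * (\<Prod>i\<in>{1..n}. ennreal (exp (lm * min (X i \<omega>) x)))) \<partial>M)
    = (\<integral>\<^sup>+\<omega>. (\<Sum>i\<in>{1..n}. indicator {real n} (real (N \<omega>)) * indicator {x<..} (X i \<omega>)) +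
       ennreal c * (indicator {real n} (real (N \<omega>)) * (\<Prod>i\<in>{1..n}. ennreal (exp (lm * min (X i \<omega>) x)))) \<partial>M)"
    by (simp add: distrib_left sum_distrib_left mult.left_commute)
  also have "\<dots> = (\<integral>\<^sup>+\<omega>. (\<Sum>i\<in>{1..n}. indicator {real n} (real (N \<omega>)) * indicator {x<..} (X i \<omega>)) \<partial>M) +
       (\<integral>\<^sup>+\<omega>. ennreal c * (indicator {real n} (real (N \<omega>)) * (\<Prod>i\<in>{1..n}. ennreal (exp (lm * min (X i \<omega>) x)))) \<partial>M)"
    by (rule nn_integral_add; measurable)
  also have "(\<integral>\<^sup>+\<omega>. (\<Sum>i\<in>{1..n}. indicator {real n} (real (N \<omega>)) * indicator {x<..} (X i \<omega>)) \<partial>M) =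
       (\<Sum>i\<in>{1..n}. \<integral>\<^sup>+\<omega>. indicator {real n} (real (N \<omega>)) * indicator {x<..} (X i \<omega>) \<partial>M)"
    by (rule nn_integral_sum) measurable
  also have "(\<integral>\<^sup>+\<omega>. ennreal c * (indicator {real n} (real (N \<omega>)) * (\<Prod>i\<in>{1..n}. ennreal (exp (lm * min (X i \<omega>) x)))) \<partial>M) =
       ennreal c * (\<integral>\<^sup>+\<omega>. indicator {real n} (real (N \<omega>)) * (\<Prod>i\<in>{1..n}. ennreal (exp (lm * min (X i \<omega>) x))) \<partial>M)"
    by (rule nn_integral_cmult) measurable
  also have "(\<Sum>i\<in>{1..n}. \<integral>\<^sup>+\<omega>. indicator {real n} (real (N \<omega>)) * indicator {x<..} (X i \<omega>) \<partial>M) =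
      (\<Sum>i\<in>{1..n}. pn n * ennreal (F x))"
  proof (rule sum.cong)
    fix i assume i: "i \<in> {1..n}"
    have "(\<integral>\<^sup>+\<omega>. indicator {real n} (real (N \<omega>)) * indicator {x<..} (X i \<omega>) \<partial>M) =
        (\<integral>\<^sup>+\<omega>. indicator {real n} (real (N \<omega>)) * (\<Prod>j\<in>{i}. indicator {x<..} (X j \<omega>)) \<partial>M)" by simp
    also have "\<dots> = pn n * (\<integral>\<^sup>+\<omega>. indicator {x<..} (X 1 \<omega>) \<partial>M) ^ card {i}"
      unfolding pn_def using i by (intro prod_int) auto
    finally show "(\<integral>\<^sup>+\<omega>. indicator {real n} (real (N \<omega>)) * indicator {x<..} (X i \<omega>) \<partial>M) = pn n * ennreal (F x)"
      using int_ind_X[of x] by simp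
  qed simp
  also have "(\<integral>\<^sup>+\<omega>. indicator {real n} (real (N \<omega>)) * (\<Prod>i\<in>{1..n}. ennreal (exp (lm * min (X i \<omega>) x))) \<partial>M)
      = pn n * Mx' ^ card {1..n}"
    unfolding pn_def Mx'_def
    using prod_int[of "{1..n}" "indicator {real n}" "\<lambda>y. ennreal (exp (lm * min y x))"] by simp
  finally have eq: "(\<integral>\<^sup>+\<omega>. indicator {real n} (real (N \<omega>)) * ((\<Sum>i\<in>{1..n}. indicator {x<..} (X i \<omega>)) +
     ennreal c * (\<Prod>i\<in>{1..n}. ennreal (exp (lm * min (X i \<omega>) x)))) \<partial>M)
     = of_nat n * (pn n * ennreal (F x)) + ennreal c * (pn n * Mx' ^ n)" by simp
  have F0: "0 \<le> F x" unfolding F_def by simp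
  have c0: "0 \<le> c" unfolding c_def by simp
  have r1: "real n * F x \<le> exp (s * real n) * (F x / s)"
  proof -
    have "1 + s * real n \<le> exp (s * real n)" by (rule exp_ge_add_one_self)
    then have "s * real n \<le> exp (s * real n)" by linarith
    then have "real n \<le> exp (s * real n) / s" using s by (simp add: le_divide_eq algebra_simps)
    then have "real n * F x \<le> exp (s * real n) / s * F x" using F0 by (rule mult_right_mono)
    then show ?thesis by simp
  qed
  have "of_nat n * (pn n * ennreal (F x)) = pn n * ennreal (real n * F x)"
    using F0 by (simp add: ennreal_mult ennreal_of_nat_eq_real_of_nat mult_ac)
  also have "\<dots> \<le> pn n * ennreal (exp (s * real n) * (F x / s))"
    by (intro mult_left_mono ennreal_leI r1) auto
  finally have t1: "of_nat n * (pn n * ennreal (F x)) \<le> pn n * ennreal (exp (s * real n) * (F x / s))" .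
  have "Mx' ^ n \<le> ennreal (exp s) ^ n" using Mx unfolding Mx'_def by (intro power_mono) auto
  also have "\<dots> = ennreal (exp (s * real n))" by (simp add: ennreal_power exp_of_nat_mult[symmetric] mult.commute)
  finally have "ennreal c * (pn n * Mx' ^ n) \<le> ennreal c * (pn n * ennreal (exp (s * real n)))"
    by (intro mult_left_mono) auto
  also have "\<dots> = pn n * ennreal (exp (s * real n) * c)" using c0 by (simp add: ennreal_mult mult_ac)
  finally have t2: "ennreal c * (pn n * Mx' ^ n) \<le> pn n * ennreal (exp (s * real n) * c)" .
  have "of_nat n * (pn n * ennreal (F x)) + ennreal c * (pn n * Mx' ^ n) \<le>
      pn n * ennreal (exp (s * real n) * (F x / s)) + pn n * ennreal (exp (s * real n) * c)"
    using t1 t2 by (rule add_mono)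
  also have "\<dots> = pn n * ennreal (exp (s * real n) * (F x / s) + exp (s * real n) * c)"
    using F0 c0 s by (simp add: distrib_left ennreal_plus)
  also have "\<dots> = pn n * ennreal (exp (s * real n)) * ennreal (F x / s + c)"
    using F0 c0 s by (simp add: ennreal_mult[symmetric] distrib_left mult.assoc)
  finally show ?thesis using eq unfolding c_def by simp
qed


lemma G_eq: "(\<integral>\<^sup>+\<omega>. ennreal (exp (s * real (N \<omega>))) \<partial>M) = (\<Sum>n. pn n * ennreal (exp (s * real n)))"
proof -
  have "(\<integral>\<^sup>+\<omega>. ennreal (exp (s * real (N \<omega>))) \<partial>M) =
      (\<Sum>n. \<integral>\<^sup>+\<omega>. indicator {real n} (real (N \<omega>)) * ennreal (exp (s * real n)) \<partial>M)"
    using decompN[of "\<lambda>n \<omega>. ennreal (exp (s * real n))"] by simp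
  also have "\<dots> = (\<Sum>n. pn n * ennreal (exp (s * real n)))"
    unfolding pn_def by (intro suminf_cong nn_integral_multc) measurable
  finally show ?thesis .
qed

lemma tail_S_bound:
  assumes s: "s > 0" and lm: "lm \<ge> 0"
    and Mx: "(\<integral>\<^sup>+\<omega>. ennreal (exp (lm * min (X 1 \<omega>) x)) \<partial>M) \<le> ennreal (exp s)"
  shows "emeasure M {\<omega>\<in>space M. S \<omega> > x} \<le>
     (\<integral>\<^sup>+\<omega>. ennreal (exp (s * real (N \<omega>))) \<partial>M) * ennreal (F x / s + exp (- lm * x))"
proof -
  define \<Phi> where "\<Phi> n \<omega> = (\<Sum>i\<in>{1..n}. indicator {x<..} (X i \<omega>)) +
     ennreal (exp (- lm * x)) * (\<Prod>i\<in>{1..n}. ennreal (exp (lm * min (X i \<omega>) x)))" for n \<omega>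
  have ms: "{\<omega>\<in>space M. S \<omega> > x} \<in> sets M" by measurable
  have "emeasure M {\<omega>\<in>space M. S \<omega> > x} = (\<integral>\<^sup>+\<omega>. indicator {\<omega>\<in>space M. S \<omega> > x} \<omega> \<partial>M)"
    using ms by simp
  also have "\<dots> \<le> (\<integral>\<^sup>+\<omega>. \<Phi> (N \<omega>) \<omega> \<partial>M)"
    by (rule nn_integral_mono) (use pw_event[OF lm] in \<open>simp add: \<Phi>_def\<close>)
  also have "\<dots> = (\<Sum>n. \<integral>\<^sup>+\<omega>. indicator {real n} (real (N \<omega>)) * \<Phi> n \<omega> \<partial>M)"
    by (rule decompN) (unfold \<Phi>_def, measurable)
  also have "\<dots> \<le> (\<Sum>n. pn n * ennreal (exp (s * real n)) * ennreal (F x / s + exp (- lm * x)))"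
    by (intro suminf_le) (use per_n[OF s lm Mx] in \<open>auto simp: \<Phi>_def\<close>)
  also have "\<dots> = (\<integral>\<^sup>+\<omega>. ennreal (exp (s * real (N \<omega>))) \<partial>M) * ennreal (F x / s + exp (- lm * x))"
    by (simp add: G_eq)
  finally show ?thesis .
qed


lemma exists_L:
  assumes e: "e > 0" and C0: "C0 > 0" and d: "d > 0"
  shows "\<exists>L::nat. C0 * exp (- (e/4) * h (real L)) * (2 / e) \<le> d / 2"
proof -
  define c where "c = (4 / e) * ln (4 * C0 / (e * d))"
  obtain t0 where t0: "\<And>t. t \<ge> t0 \<Longrightarrow> h t > c"
    using h_pos_ev[of c] by (auto simp: eventually_at_top_linorder)
  define L where "L = nat (ceiling (max t0 0))"
  have "real L \<ge> t0" unfolding L_def by linarith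
  then have hL: "h (real L) > c" by (rule t0)
  have "- (e/4) * h (real L) < - (e/4) * c" using hL e by simp
  also have "- (e/4) * c = ln (e * d / (4 * C0))"
    unfolding c_def using e C0 d by (simp add: ln_div ln_mult field_simps)
  finally have "exp (- (e/4) * h (real L)) < e * d / (4 * C0)"
    using e C0 d by (metis exp_less_cancel_iff exp_ln divide_pos_pos mult_pos_pos zero_less_numeral)
  then have "C0 * exp (- (e/4) * h (real L)) * (2 / e) \<le> C0 * (e * d / (4 * C0)) * (2 / e)"
    using C0 e by (intro mult_right_mono mult_left_mono) auto
  also have "\<dots> = d / 2" using C0 e by (simp add: field_simps)
  finally show ?thesis by blast
qed

lemma upperA:
  assumes e: "0 < e" "e < 1"
  shows "\<exists>K>0. eventually (\<lambda>x. prob {\<omega>\<in>space M. S \<omega> > x} \<le> K * exp (- (1 - e) * h x)) at_top"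
proof -
  obtain s where s: "s > 0" and G: "(\<integral>\<^sup>+\<omega>. ennreal (exp (s * real (N \<omega>))) \<partial>M) \<noteq> \<infinity>"
    using N_light unfolding light_tailed_def heavy_tailed_def by auto
  define Gr where "Gr = enn2real (\<integral>\<^sup>+\<omega>. ennreal (exp (s * real (N \<omega>))) \<partial>M)"
  have GGr: "(\<integral>\<^sup>+\<omega>. ennreal (exp (s * real (N \<omega>))) \<partial>M) = ennreal Gr" using G unfolding Gr_def
    by (simp add: ennreal_enn2real_if less_top)
  have Gr0: "Gr \<ge> 0" unfolding Gr_def by simp
  have e4: "0 < e/4" "e/4 < 1" using e by auto
  obtain C0 where C0: "C0 \<ge> 1" "\<And>t. t \<ge> 0 \<Longrightarrow> F t \<le> C0 * exp (- (1 - e/4) * h t)"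
    using tailX_glob[OF e4] by auto
  define d where "d = exp (s/2) - 1"
  have d: "d > 0" unfolding d_def using s by simp
  obtain L :: nat where L: "C0 * exp (- (e/4) * h (real L)) * (2 / e) \<le> d / 2"
    using exists_L[OF e(1) _ d, of C0] C0 by auto
  define \<beta> where "\<beta> = min (s/2) (d / (2 * C0 * (real L + 1)))"
  have b: "\<beta> > 0" unfolding \<beta>_def using s d C0 by auto
  define K where "K = Gr * (C0 / s + 1) + 1"
  have K: "K > 0" unfolding K_def using Gr0 C0 s by (simp add: add_nonneg_pos)
  have "eventually (\<lambda>x. prob {\<omega>\<in>space M. S \<omega> > x} \<le> K * exp (- (1 - e) * h x)) at_top"
    using mu_ev[OF b] h_pos_ev[of 0] eventually_ge_at_top[of 1]
  proof eventually_elim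
    case (elim x)
    then have mu: "h x / x < \<beta>" and hx: "h x > 0" and x: "x \<ge> 1" by auto
    define lm where "lm = (1 - e) * (h x / x)"
    have lm0: "lm \<ge> 0" unfolding lm_def using e hx x by simp
    have lmb: "lm \<le> h x / x" unfolding lm_def by (rule mult_left_le_one_le) (use e hx x in auto)
    have Mxb: "(\<integral>\<^sup>+\<omega>. ennreal (exp (lm * min (X 1 \<omega>) x)) \<partial>M)
      \<le> ennreal (exp lm * (1 + C0 * lm * real L + C0 * exp (- (e/4) * h (real L)) * (2 / e)))"
      unfolding lm_def by (rule Mx_bound[OF e _ C0(2) x hx]) (use C0 in auto)
    have pos: "2 * C0 * (real L + 1) > 0" using C0 by simp
    have "lm \<le> d / (2 * C0 * (real L + 1))" using lmb mu unfolding \<beta>_def by simp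
    then have a1: "lm * (2 * C0 * (real L + 1)) \<le> d" using pos by (simp add: le_divide_eq)
    have a2: "C0 * lm * real L \<le> C0 * lm * (real L + 1)" using C0 lm0 by (intro mult_left_mono) auto
    have a3: "lm * (2 * C0 * (real L + 1)) = 2 * (C0 * lm * (real L + 1))" by (simp add: algebra_simps)
    have t1: "C0 * lm * real L \<le> d / 2" using a1 a2 a3 by linarith
    have "1 + C0 * lm * real L + C0 * exp (- (e/4) * h (real L)) * (2 / e) \<le> exp (s/2)"
      using t1 L unfolding d_def by simp
    moreover have "exp lm \<le> exp (s/2)"
    proof -
      have "\<beta> \<le> s/2" unfolding \<beta>_def by (rule min.cobounded1)
      then have "lm \<le> s/2" using lmb mu by linarith
      then show ?thesis by simp
    qed
    moreover have "0 \<le> 1 + C0 * lm * real L + C0 * exp (- (e/4) * h (real L)) * (2 / e)"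
      using C0 lm0 e by (intro add_nonneg_nonneg mult_nonneg_nonneg) auto
    ultimately have "exp lm * (1 + C0 * lm * real L + C0 * exp (- (e/4) * h (real L)) * (2 / e)) \<le> exp (s/2) * exp (s/2)"
      by (intro mult_mono) auto
    also have "\<dots> = exp s" by (simp add: exp_add[symmetric])
    finally have "(\<integral>\<^sup>+\<omega>. ennreal (exp (lm * min (X 1 \<omega>) x)) \<partial>M) \<le> ennreal (exp s)"
      using Mxb by (meson ennreal_leI order_trans)
    from tail_S_bound[OF s lm0 this]
    have em: "emeasure M {\<omega>\<in>space M. S \<omega> > x} \<le> ennreal Gr * ennreal (F x / s + exp (- lm * x))"
      using GGr by simp
    have F0: "0 \<le> F x" unfolding F_def by simp
    have bnd: "F x / s + exp (- lm * x) \<le> (C0 / s + 1) * exp (- (1 - e) * h x)"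
    proof -
      have lx: "- lm * x = - (1 - e) * h x" unfolding lm_def using x by (simp add: field_simps)
      have "F x \<le> C0 * exp (- (1 - e/4) * h x)" using C0(2) x by simp
      also have "\<dots> \<le> C0 * exp (- (1 - e) * h x)" using C0 e hx by (intro mult_left_mono) auto
      finally have "F x / s \<le> C0 * exp (- (1 - e) * h x) / s" using s by (simp add: divide_right_mono)
      moreover have "exp (- lm * x) = exp (- (1 - e) * h x)" using lx by (simp only:)
      moreover have "(C0 / s + 1) * exp (- (1 - e) * h x) = C0 * exp (- (1 - e) * h x) / s + exp (- (1 - e) * h x)"
        by (simp add: algebra_simps)
      ultimately show ?thesis by linarith
    qed
    have "ennreal (prob {\<omega>\<in>space M. S \<omega> > x}) \<le> ennreal (Gr * (F x / s + exp (- lm * x)))"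
      using em Gr0 F0 s by (simp add: emeasure_eq_measure ennreal_mult)
    then have "prob {\<omega>\<in>space M. S \<omega> > x} \<le> Gr * (F x / s + exp (- lm * x))"
      using Gr0 F0 s by (subst (asm) ennreal_le_iff) auto
    also have "\<dots> \<le> Gr * ((C0 / s + 1) * exp (- (1 - e) * h x))"
      using bnd Gr0 by (rule mult_left_mono)
    also have "\<dots> \<le> K * exp (- (1 - e) * h x)"
      unfolding K_def by (simp add: algebra_simps)
    finally show ?case .
  qed
  then show ?thesis using K by blast
qed


lemma Liminf_ge: "1 \<le> Liminf at_top (\<lambda>x. tail_rate M S x / ereal (h x))"
  unfolding le_Liminf_iff
proof (intro allI impI)
  fix y :: ereal assume "y < 1"
  then obtain r :: real where r: "y < ereal r" "ereal r < 1" using ereal_dense2 by blast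
  define e where "e = (1 - max r 0) / 2"
  have e: "0 < e" "e < 1" using r unfolding e_def by auto
  obtain K where K: "K > 0" and ev: "eventually (\<lambda>x. prob {\<omega>\<in>space M. S \<omega> > x} \<le> K * exp (- (1 - e) * h x)) at_top"
    using upperA[OF e] by blast
  show "eventually (\<lambda>x. y < tail_rate M S x / ereal (h x)) at_top"
    using ev h_pos_ev[of "max 0 (ln K / e)"]
  proof eventually_elim
    case (elim x)
    define P where "P = prob {\<omega>\<in>space M. S \<omega> > x}"
    have hx: "h x > 0" "h x > ln K / e" using elim by auto
    show ?case
    proof (cases "P = 0")
      case True
      then show ?thesis using ratio_eq[OF hx(1), of S] r(1) unfolding P_def by auto
    next
      case False
      then have P0: "P > 0" unfolding P_def by (simp add: zero_less_measure_iff)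
      have "ln P \<le> ln (K * exp (- (1 - e) * h x))" using elim P0 unfolding P_def by simp
      also have "\<dots> = ln K - (1 - e) * h x" using K by (simp add: ln_mult algebra_simps)
      finally have lP: "ln P \<le> ln K - (1 - e) * h x" .
      have "ln K < e * h x" using hx e by (simp add: pos_divide_less_eq mult.commute)
      then have "(1 - 2 * e) * h x < - ln P" using lP by (simp add: algebra_simps)
      then have "1 - 2 * e < - ln P / h x" using hx lt_neg_div[of "h x" "1 - 2 * e" "ln P"] by simp
      moreover have "1 - 2 * e = max r 0" unfolding e_def by (simp add: field_simps)
      ultimately have "r < - ln P / h x" by linarith
      then have "y < ereal (- ln P / h x)" using r by (meson ereal_less_eq(3) less_imp_le order.strict_trans2 ereal_less(2) less_ereal.simps(1))
      then show ?thesis using ratio_eq[OF hx(1), of S] False unfolding P_def by simp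
    qed
  qed
qed

lemma Liminf_le: "Liminf at_top (\<lambda>x. tail_rate M S x / ereal (h x)) \<le> 1"
proof (rule ccontr)
  define fS where "fS x = tail_rate M S x / ereal (h x)" for x
  define fX where "fX x = tail_rate M (X 1) x / ereal (h x)" for x
  assume "\<not> ?thesis"
  then have "1 < Liminf at_top fS" unfolding fS_def by simp
  then obtain r :: real where r: "1 < ereal r" "ereal r < Liminf at_top fS" using ereal_dense2 by blast
  have evS: "eventually (\<lambda>x. ereal r < fS x) at_top"
    using r(2) le_Liminf_iff[of "Liminf at_top fS" at_top fS] by auto
  define \<rho> where "\<rho> = (1 + r) / 2"
  have rho: "1 < \<rho>" "\<rho> < r" using r unfolding \<rho>_def by auto
  have freq: "\<And>T. \<exists>y\<ge>T. fX y < ereal \<rho>"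
  proof (rule ccontr)
    fix T assume "\<not> (\<exists>y\<ge>T. fX y < ereal \<rho>)"
    then have "eventually (\<lambda>y. ereal \<rho> \<le> fX y) at_top"
      unfolding eventually_at_top_linorder by (auto simp: not_less)
    then have "ereal \<rho> \<le> Liminf at_top fX" by (intro Liminf_bounded) auto
    then show False using h_lim rho unfolding fX_def by simp
  qed
  obtain c K where cK: "c \<ge> 0" "K > 0" "\<And>y. prob {\<omega>\<in>space M. S \<omega> > y - c} \<ge> K * F y"
    using lowerB by blast
  define H0 where "H0 = max 1 ((\<rho> * h c - ln K) / (r - \<rho>))"
  have "eventually (\<lambda>z. ereal r < fS z \<and> h z > H0 \<and> z \<ge> 0) at_top"
    using evS h_pos_ev[of H0] eventually_ge_at_top[of 0] by eventually_elim auto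
  then obtain T where T: "\<And>z. z \<ge> T \<Longrightarrow> ereal r < fS z \<and> h z > H0 \<and> z \<ge> 0"
    unfolding eventually_at_top_linorder by blast
  obtain y where y: "y \<ge> T + c" "fX y < ereal \<rho>" using freq by blast
  define z where "z = y - c"
  have zT: "z \<ge> T" unfolding z_def using y by simp
  from T[OF zT] have z: "ereal r < fS z" "h z > H0" "z \<ge> 0" by auto
  have hz: "h z > 0" "h z \<ge> 1" "h z > (\<rho> * h c - ln K) / (r - \<rho>)" using z unfolding H0_def by auto
  have yz: "y = z + c" unfolding z_def by simp
  have hy: "h y \<le> h z + h c" unfolding yz by (rule h_subadd[OF h_cc h_0 z(3) cK(1)])
  have hy0: "h y > 0" using h_mono[OF h_cc h_nn z(3), of y] cK(1) yz hz by simp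
  have Fy: "F y > 0" and lFy: "- ln (F y) < \<rho> * h y"
  proof -
    have nz: "F y \<noteq> 0"
    proof
      assume "F y = 0"
      then have "fX y = \<infinity>" unfolding fX_def using ratio_eq[OF hy0, of "X 1"] unfolding F_def by simp
      then show False using y by simp
    qed
    then show "F y > 0" unfolding F_def by (simp add: zero_less_measure_iff)
    have "ereal (- ln (F y) / h y) < ereal \<rho>"
      using y(2) nz ratio_eq[OF hy0, of "X 1"] unfolding fX_def F_def by simp
    then have q: "- (ln (F y) / h y) < \<rho>" by simp
    have "- ln (F y) = (- (ln (F y) / h y)) * h y" using hy0 by simp
    also have "\<dots> < \<rho> * h y" using q hy0 by (rule mult_strict_right_mono)
    finally show "- ln (F y) < \<rho> * h y" .
  qed
  define P where "P = prob {\<omega>\<in>space M. S \<omega> > z}"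
  have PK: "P \<ge> K * F y" unfolding P_def using cK(3)[of y] yz by simp
  have P0: "P > 0" using PK cK(2) Fy by (meson mult_pos_pos less_le_trans)
  have "- ln P \<le> - ln (K * F y)" using PK P0 cK(2) Fy by simp
  also have "\<dots> = - ln K - ln (F y)" using cK(2) Fy by (simp add: ln_mult)
  also have "\<dots> < - ln K + \<rho> * h y" using lFy by simp
  also have "\<dots> \<le> - ln K + \<rho> * (h z + h c)" using hy rho by simp
  finally have a: "- ln P < - ln K + \<rho> * h z + \<rho> * h c" by (simp add: algebra_simps)
  have "(\<rho> * h c - ln K) < (r - \<rho>) * h z" using hz(3) rho by (simp add: pos_divide_less_eq mult.commute)
  then have "- ln P < r * h z" using a by (simp add: algebra_simps)
  then have "- ln P / h z < r" using hz neg_div_lt[of "h z" "ln P" r] by simp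
  moreover have "fS z = ereal (- ln P / h z)"
    unfolding fS_def P_def using ratio_eq[OF hz(1), of S] P0 unfolding P_def by simp
  ultimately show False using z(1) by simp
qed

lemma scaleS: "natural_scale M S h"
  unfolding natural_scale_def
  using heavyS h_cc h_nn h_0 h_top Liminf_ge Liminf_le by (auto intro: antisym)

end

theorem mainTheorem10:
  fixes M :: "'a measure" and X :: "nat \<Rightarrow> 'a \<Rightarrow> real" and N :: "'a \<Rightarrow> nat"
    and h :: "real \<Rightarrow> real" and \<delta> :: real
  assumes "prob_space M"
    and indep: "prob_space.indep_vars M (\<lambda>_. borel)
                  (\<lambda>i \<omega>. if i = 0 then real (N \<omega>) else X i \<omega>) UNIV"
    and ident: "\<And>i. i \<ge> 1 \<Longrightarrow> distr M borel (X i) = distr M borel (X 1)"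
    and heavy: "heavy_tailed M (X 1)"
    and int: "integrable M (X 1)"
    and mean_pos: "0 < (\<integral>\<omega>. X 1 \<omega> \<partial>M)"
    and \<delta>_pos: "\<delta> > 0"
    and moment: "(\<integral>\<^sup>+ \<omega>. ennreal ((max 0 (X 1 \<omega>)) powr (1 + \<delta>)) \<partial>M) < \<infinity>"
    and N_pos: "\<And>\<omega>. \<omega> \<in> space M \<Longrightarrow> N \<omega> \<ge> 1"
    and N_light: "light_tailed M (\<lambda>\<omega>. real (N \<omega>))"
    and scale: "natural_scale M (X 1) h"
    and h_log: "\<forall>\<^sub>F x in at_top. h x \<ge> (1 + \<delta>) * ln x"
  shows "natural_scale M (\<lambda>\<omega>. \<Sum>k=1..N \<omega>. X k \<omega>) h"
  proof -
  have c: "ctx M X N h"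
    apply (rule ctx.intro[OF assms(1)])
    apply (rule ctx_axioms.intro)
         apply (rule indep)
        apply (rule ident, assumption)
       apply (rule heavy)
      apply (rule N_pos, assumption)
     apply (rule N_light)
    apply (rule scale)
    done
  interpret ctx M X N h by (rule c)
  have "natural_scale M S h" by (rule scaleS)
  then show ?thesis unfolding S_def .
qed

end
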